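(* Let $p$ be an odd prime and $q\in\mathbb C_p$ with $|1-q|_p<p^{-1/(p-1)}$. For $n\in\mathbb Z_+$ and $x\in\mathbb Z_p$, $$E_{n,q}(x)=2\sum_{l=0}^n\sum_{k=l}^n\sum_{\substack{l_0+\cdots+l_k=n-k\\ l_0,\dots,l_k\in\mathbb Z_+}}q^{\sum_{i=0}^k il_i}\frac{1}{(1-q)^{n+l-k}}s_{1,q}(k,l)(-1)^k\frac{q^{lx}}{1+q^l}.$$
   Context: $[x]_q=\frac{1-q^x}{1-q}$. The fermionic $p$-adic integral of a uniformly differentiable $f:\mathbb Z_p\to\mathbb C_p$ is $\int_{\mathbb Z_p}f(y)\,d\mu_{-1}(y)=\lim_{N\to\infty}\sum_{y=0}^{p^N-1}f(y)(-1)^y$. The $q$-Euler polynomials are $E_{n,q}(x)=\int_{\mathbb Z_p}[x+y]_q^n\,d\mu_{-1}(y)$. The $q$-Stirling numbers of the first kind $s_{1,q}(k,l)$ are defined by $[x]_q[x-1]_q\cdots[x-k+1]_q=q^{-\binom k2}\sum_{l=0}^k s_{1,q}(k,l)[x]_q^l$, as an identity of polynomials in $[x]_q$ (using $[x-i]_q=q^{-i}([x]_q-[i]_q)$). *)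

theory Defs
  imports "HOL-Computational_Algebra.Polynomial" "HOL-Computational_Algebra.Primes"
begin

text \<open>The field C_p is modelled abstractly: a field of characteristic 0 (type 'a)
  carrying an absolute value absv such that (K, absv) is a complete, algebraically
  closed, non-archimedean valued field with absv p = 1/p, in which the elements
  algebraic over Q are dense.  These properties characterise C_p up to isometric
  isomorphism.\<close>

definition abs_tends_zero :: "(nat \<Rightarrow> real) \<Rightarrow> bool" where
  "abs_tends_zero u \<longleftrightarrow> (\<forall>e>0. \<exists>M. \<forall>m\<ge>M. u m < e)"

definition is_Cp :: "nat \<Rightarrow> ('a::field_char_0 \<Rightarrow> real) \<Rightarrow> bool" where
  "is_Cp p absv \<longleftrightarrow>
     (\<forall>x. absv x \<ge> 0) \<and>
     (\<forall>x. absv x = 0 \<longleftrightarrow> x = 0) \<and>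
     (\<forall>x y. absv (x * y) = absv x * absv y) \<and>
     (\<forall>x y. absv (x + y) \<le> max (absv x) (absv y)) \<and>
     absv (of_nat p) = 1 / real p \<and>
     (\<forall>X::nat \<Rightarrow> 'a. (\<forall>e>0. \<exists>M. \<forall>m\<ge>M. \<forall>n\<ge>M. absv (X m - X n) < e)
        \<longrightarrow> (\<exists>L. abs_tends_zero (\<lambda>n. absv (X n - L)))) \<and>
     (\<forall>P::'a poly. degree P \<ge> 1 \<longrightarrow> (\<exists>z. poly P z = 0)) \<and>
     (\<forall>z. \<forall>e>0. \<exists>w. absv (z - w) < e \<and>
          (\<exists>P::rat poly. P \<noteq> 0 \<and> poly (map_poly of_rat P) w = 0))"

definition Zp :: "('a::field_char_0 \<Rightarrow> real) \<Rightarrow> 'a set" where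
  "Zp absv = {z. \<forall>e>0. \<exists>n::int. absv (z - of_int n) < e}"

definition qpow_has :: "('a::field_char_0 \<Rightarrow> real) \<Rightarrow> 'a \<Rightarrow> 'a \<Rightarrow> 'a \<Rightarrow> bool" where
  "qpow_has absv q x v \<longleftrightarrow>
     (\<forall>e>0. \<exists>d>0. \<forall>n::int. absv (x - of_int n) < d \<longrightarrow> absv (q powi n - v) < e)"

definition qpow :: "('a::field_char_0 \<Rightarrow> real) \<Rightarrow> 'a \<Rightarrow> 'a \<Rightarrow> 'a" where
  "qpow absv q x = (THE v. qpow_has absv q x v)"

definition qnum :: "('a::field_char_0 \<Rightarrow> real) \<Rightarrow> 'a \<Rightarrow> 'a \<Rightarrow> 'a" where
  "qnum absv q x = (1 - qpow absv q x) / (1 - q)"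

definition fermionic_has ::
  "nat \<Rightarrow> ('a::field_char_0 \<Rightarrow> real) \<Rightarrow> ('a \<Rightarrow> 'a) \<Rightarrow> 'a \<Rightarrow> bool" where
  "fermionic_has p absv f v \<longleftrightarrow>
     abs_tends_zero (\<lambda>N. absv ((\<Sum>y<p^N. f (of_nat y) * (-1)^y) - v))"

text \<open>q-Stirling numbers of the first kind: s_{1,q}(k,l) is the coefficient of T^l in
  q^(k choose 2) * prod_{i<k} q^(-i) (T - [i]_q), i.e. the identity
  [x]_q[x-1]_q...[x-k+1]_q = q^(-binom k 2) sum_l s_{1,q}(k,l) [x]_q^l
  with [x-i]_q = q^(-i)([x]_q - [i]_q), read as a polynomial identity in T = [x]_q.\<close>
definition stirling1q :: "'a::field_char_0 \<Rightarrow> nat \<Rightarrow> nat \<Rightarrow> 'a" where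
  "stirling1q q k l =
     coeff (smult (q ^ (k choose 2))
        (\<Prod>i<k. smult (inverse q ^ i) [: - ((1 - q ^ i) / (1 - q)), 1 :])) l"

definition comps :: "nat \<Rightarrow> nat \<Rightarrow> (nat \<Rightarrow> nat) set" where
  "comps k m = {ls. (\<forall>i>k. ls i = 0) \<and> (\<Sum>i\<le>k. ls i) = m}"

end

theory Submission
  imports Defs
begin


definition G :: "'a::field \<Rightarrow> nat \<Rightarrow> nat \<Rightarrow> 'a" where
  "G q k m = (\<Sum>ls\<in>comps k m. q ^ (\<Sum>i\<le>k. i * ls i))"

lemma comps_finite: "finite (comps k m)"
proof -
  have "comps k m \<subseteq> {f. \<forall>x. (x \<in> {..k} \<longrightarrow> f x \<in> {..m}) \<and> (x \<notin> {..k} \<longrightarrow> f x = 0)}"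
  proof
    fix f assume f: "f \<in> comps k m"
    { fix x assume "x \<le> k"
      hence "f x \<le> (\<Sum>i\<le>k. f i)" by (intro member_le_sum) auto
      hence "f x \<le> m" using f by (simp add: comps_def) }
    thus "f \<in> {f. \<forall>x. (x \<in> {..k} \<longrightarrow> f x \<in> {..m}) \<and> (x \<notin> {..k} \<longrightarrow> f x = 0)}"
      using f by (auto simp: comps_def)
  qed
  thus ?thesis by (rule finite_subset) (intro finite_set_of_finite_funs, auto)
qed

lemma G_0: "G q 0 m = 1"
proof -
  have "comps 0 m = {\<lambda>i. if i = 0 then m else 0}"
    by (auto simp: comps_def fun_eq_iff)
  thus ?thesis by (simp add: G_def)
qed

lemma G_m0: "G q k 0 = 1"
proof -
  have "comps k 0 = {\<lambda>i. 0}"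
    by (auto simp: comps_def fun_eq_iff) (metis atMost_iff le_less_linear)
  thus ?thesis by (simp add: G_def)
qed

lemma G_rec: "G q (Suc k) m = G q k m + (if m = 0 then 0 else q ^ Suc k * G q (Suc k) (m - 1))"
proof -
  let ?K = "Suc k"
  let ?w = "\<lambda>k ls. (\<Sum>i\<le>k. i * (ls::nat\<Rightarrow>nat) i)"
  have split: "comps ?K m = comps k m \<union> {ls\<in>comps ?K m. ls ?K > 0}"
    by (auto simp: comps_def) (metis Suc_lessI not_gr0)+
  have disj: "comps k m \<inter> {ls\<in>comps ?K m. ls ?K > 0} = {}"
    by (auto simp: comps_def)
  have fin2: "finite {ls\<in>comps ?K m. ls ?K > 0}" using comps_finite[of ?K m] by simp
  have s1: "(\<Sum>ls\<in>comps k m. q ^ ?w ?K ls) = G q k m"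
    unfolding G_def by (intro sum.cong) (auto simp: comps_def)
  have s2: "(\<Sum>ls\<in>{ls\<in>comps ?K m. ls ?K > 0}. q ^ ?w ?K ls)
      = (if m = 0 then 0 else q ^ Suc k * G q (Suc k) (m - 1))"
  proof (cases "m = 0")
    case True
    have E: "{ls\<in>comps ?K m. ls ?K > 0} = {}"
    proof (rule ccontr)
      assume "{ls\<in>comps ?K m. ls ?K > 0} \<noteq> {}"
      then obtain ls where ls: "ls \<in> comps ?K m" "ls ?K > 0" by auto
      have "ls ?K \<le> (\<Sum>i\<le>?K. ls i)" by (intro member_le_sum) auto
      thus False using ls True by (simp add: comps_def)
    qed
    show ?thesis unfolding E using True by simp
  next
    case False
    have "(\<Sum>ls\<in>{ls\<in>comps ?K m. ls ?K > 0}. q ^ ?w ?K ls)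
        = (\<Sum>ls\<in>comps ?K (m - 1). q ^ ?w ?K (ls(?K := ls ?K + 1)))"
    proof (rule sum.reindex_bij_witness[where i = "\<lambda>ls. ls(?K := ls ?K + 1)" and j = "\<lambda>ls. ls(?K := ls ?K - 1)"])
      fix a assume a: "a \<in> {ls\<in>comps ?K m. ls ?K > 0}"
      show "(a(?K := a ?K - 1))(?K := (a(?K := a ?K - 1)) ?K + 1) = a" using a by auto
      have "(\<Sum>i\<le>?K. (a(?K := a ?K - 1)) i) = (\<Sum>i\<le>k. a i) + (a ?K - 1)"
        by (simp add: sum.atMost_Suc)
      also have "\<dots> = m - 1" using a by (auto simp: comps_def sum.atMost_Suc)
      finally show "a(?K := a ?K - 1) \<in> comps ?K (m - 1)" using a by (auto simp: comps_def)
    next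
      fix b assume b: "b \<in> comps ?K (m - 1)"
      show "(b(?K := b ?K + 1))(?K := (b(?K := b ?K + 1)) ?K - 1) = b" by auto
      have "(\<Sum>i\<le>?K. (b(?K := b ?K + 1)) i) = (\<Sum>i\<le>k. b i) + b ?K + 1"
        by (simp add: sum.atMost_Suc)
      also have "\<dots> = m" using b False by (auto simp: comps_def sum.atMost_Suc)
      finally show "b(?K := b ?K + 1) \<in> {ls\<in>comps ?K m. ls ?K > 0}" using b by (auto simp: comps_def)
    qed simp
    also have "\<dots> = (\<Sum>ls\<in>comps ?K (m - 1). q ^ Suc k * q ^ ?w ?K ls)"
    proof (intro sum.cong refl)
      fix ls :: "nat \<Rightarrow> nat"
      have "?w ?K (ls(?K := ls ?K + 1)) = Suc k + ?w ?K ls"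
        by (simp add: sum.atMost_Suc)
      thus "q ^ ?w ?K (ls(?K := ls ?K + 1)) = q ^ Suc k * q ^ ?w ?K ls" by (simp add: power_add)
    qed
    finally show ?thesis using False by (simp add: G_def sum_distrib_left)
  qed
  have "G q ?K m = (\<Sum>ls\<in>comps ?K m. q ^ ?w ?K ls)" by (simp add: G_def)
  also have "\<dots> = (\<Sum>ls\<in>comps k m. q ^ ?w ?K ls) + (\<Sum>ls\<in>{ls\<in>comps ?K m. ls ?K > 0}. q ^ ?w ?K ls)"
    by (subst split, rule sum.union_disjoint) (use comps_finite fin2 disj in auto)
  finally show ?thesis using s1 s2 by simp
qed




lemma newton:
  fixes q Z :: "'a::field"
  shows "Z ^ n = (\<Sum>k\<le>n. G q k (n - k) * (\<Prod>i<k. Z - q ^ i))"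
proof (induction n)
  case 0
  then show ?case by (simp add: G_0)
next
  case (Suc n)
  define P where "P k = (\<Prod>i<k. Z - q ^ i)" for k
  have ZP: "Z * P k = P (Suc k) + q ^ k * P k" for k
    by (simp add: P_def algebra_simps)
  define f where "f k = q ^ k * G q k (n - k) * P k" for k
  have "Z ^ Suc n = Z * (\<Sum>k\<le>n. G q k (n - k) * P k)" using Suc by (simp add: P_def)
  also have "\<dots> = (\<Sum>k\<le>n. G q k (n - k) * P (Suc k) + f k)"
    unfolding sum_distrib_left
  proof (intro sum.cong refl)
    fix k
    have "Z * (G q k (n - k) * P k) = G q k (n - k) * (Z * P k)" by (simp add: ac_simps)
    also have "\<dots> = G q k (n - k) * (P (Suc k) + q ^ k * P k)" by (simp only: ZP)
    finally show "Z * (G q k (n - k) * P k) = G q k (n - k) * P (Suc k) + f k"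
      by (simp add: f_def algebra_simps)
  qed
  also have "\<dots> = (\<Sum>k\<le>n. G q k (n - k) * P (Suc k)) + (\<Sum>k\<le>n. f k)"
    by (rule sum.distrib)
  also have "(\<Sum>k\<le>n. f k) = 1 + (\<Sum>k<n. f (Suc k))"
  proof -
    have "(\<Sum>k\<le>n. f k) = (\<Sum>k<Suc n. f k)" by (simp add: lessThan_Suc_atMost)
    also have "\<dots> = f 0 + (\<Sum>k<n. f (Suc k))" by (rule sum.lessThan_Suc_shift)
    finally show ?thesis by (simp add: f_def G_0 P_def)
  qed
  also have "(\<Sum>k<n. f (Suc k)) = (\<Sum>k\<le>n. (if n - k = 0 then 0 else q ^ Suc k * G q (Suc k) (n - k - 1)) * P (Suc k))"
  proof -
    have "(\<Sum>k\<le>n. (if n - k = 0 then 0 else q ^ Suc k * G q (Suc k) (n - k - 1)) * P (Suc k))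
        = (\<Sum>k<Suc n. (if k < n then f (Suc k) else 0))"
      by (intro sum.cong) (auto simp: f_def lessThan_Suc_atMost)
    also have "\<dots> = (\<Sum>k<n. f (Suc k))" by simp
    finally show ?thesis by simp
  qed
  also have "(\<Sum>k\<le>n. G q k (n - k) * P (Suc k)) + (1 + (\<Sum>k\<le>n. (if n - k = 0 then 0 else q ^ Suc k * G q (Suc k) (n - k - 1)) * P (Suc k)))
      = 1 + (\<Sum>k\<le>n. G q (Suc k) (Suc n - Suc k) * P (Suc k))"
    by (simp add: G_rec[of q _ "n - _"] sum.distrib algebra_simps)
  also have "\<dots> = (\<Sum>k\<le>Suc n. G q k (Suc n - k) * P k)"
    by (simp only: sum.atMost_Suc_shift G_0 diff_Suc_Suc P_def) simp
  finally show ?case by (simp add: P_def)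
qed




definition SP :: "'a::field_char_0 \<Rightarrow> nat \<Rightarrow> 'a poly" where
  "SP q k = smult (q ^ (k choose 2))
        (\<Prod>i<k. smult (inverse q ^ i) [: - ((1 - q ^ i) / (1 - q)), 1 :])"

lemma stirling_SP: "stirling1q q k l = coeff (SP q k) l"
  by (simp add: stirling1q_def SP_def)

lemma choose2_Suc: "Suc k choose 2 = (k choose 2) + k"
  by (simp add: numeral_2_eq_2)

lemma inv_prod_aux:
  fixes q :: "'a::field"
  assumes "q \<noteq> 0"
  shows "q ^ (k choose 2) * (\<Prod>i<k. inverse q ^ i) = 1"
proof (induction k)
  case 0 show ?case by (simp add: numeral_2_eq_2)
next
  case (Suc k)
  have "q ^ (Suc k choose 2) * (\<Prod>i<Suc k. inverse q ^ i)
      = (q ^ (k choose 2) * (\<Prod>i<k. inverse q ^ i)) * (q ^ k * inverse q ^ k)"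
    by (simp add: choose2_Suc power_add ac_simps)
  also have "\<dots> = 1" using Suc assms by (simp flip: power_mult_distrib)
  finally show ?case .
qed

lemma SP_poly:
  fixes q :: "'a::field_char_0"
  assumes "q \<noteq> 0"
  shows "poly (SP q k) Y = (\<Prod>i<k. Y - (1 - q ^ i) / (1 - q))"
proof -
  have "poly (SP q k) Y = q ^ (k choose 2) * (\<Prod>i<k. inverse q ^ i * (Y - (1 - q ^ i) / (1 - q)))"
    unfolding SP_def poly_smult poly_prod by simp
  also have "\<dots> = (q ^ (k choose 2) * (\<Prod>i<k. inverse q ^ i)) * (\<Prod>i<k. Y - (1 - q ^ i) / (1 - q))"
    by (simp add: prod.distrib)
  also have "\<dots> = (\<Prod>i<k. Y - (1 - q ^ i) / (1 - q))" using inv_prod_aux[OF assms] by simp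
  finally show ?thesis .
qed

lemma SP_degree: "degree (SP q k) \<le> k"
proof -
  have "degree (\<Prod>i<k. smult (inverse q ^ i) [: - ((1 - q ^ i) / (1 - q)), 1 :])
      \<le> (\<Sum>i<k. degree (smult (inverse q ^ i) [: - ((1 - q ^ i) / (1 - q)), 1 :]))"
    using degree_prod_sum_le[of "{..<k}" "\<lambda>i. smult (inverse q ^ i) [: - ((1 - q ^ i) / (1 - q)), 1 :]"]
    by (simp only: o_def finite_lessThan)
  also have "\<dots> \<le> (\<Sum>i<k. 1)"
    by (intro sum_mono) (rule order_trans[OF degree_smult_le], simp)
  finally have "degree (\<Prod>i<k. smult (inverse q ^ i) [: - ((1 - q ^ i) / (1 - q)), 1 :]) \<le> k" by simp
  thus ?thesis unfolding SP_def by (rule order_trans[OF degree_smult_le])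
qed

lemma coeff_identity:
  fixes q :: "'a::field_char_0"
  assumes q0: "q \<noteq> 0" and q1: "q \<noteq> 1" and ln: "l \<le> n"
  shows "(\<Sum>k=l..n. G q k (n - k) * (1 / (1 - q) ^ (n + l - k)) * stirling1q q k l * (-1) ^ k)
       = of_nat (n choose l) * (-1) ^ l / (1 - q) ^ n"
proof -
  define c where "c = 1 - q"
  have c0: "c \<noteq> 0" using q1 by (simp add: c_def)
  define A where "A = (\<Sum>k\<le>n. smult (G q k (n - k) * c ^ k * (-1) ^ k) (SP q k))"
  define Bp where "Bp = (\<Sum>j\<le>n. monom (of_nat (n choose j) * (- c) ^ j) j)"
  have "poly A Y = poly Bp Y" for Y
  proof -
    have "poly A Y = (\<Sum>k\<le>n. G q k (n - k) * (\<Prod>i<k. (1 - c * Y) - q ^ i))"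
      unfolding A_def poly_sum
    proof (intro sum.cong refl)
      fix k
      define f where "f i = Y - (1 - q ^ i) / (1 - q)" for i
      have "(\<Prod>i<k. (- c) * f i) = (\<Prod>i<k. (- c)) * (\<Prod>i<k. f i)"
        by (rule prod.distrib)
      also have "(\<Prod>i<k. (- c)) = (-c) ^ k" by simp
      finally have e1: "(\<Prod>i<k. (- c) * f i) = c ^ k * (-1) ^ k * (\<Prod>i<k. f i)"
        by (simp only: power_minus[of c] ac_simps)
      have e2: "(- c) * f i = (1 - c * Y) - q ^ i" for i
      proof -
        have h: "c * ((1 - q ^ i) / (1 - q)) = 1 - q ^ i" using c0 by (simp add: c_def)
        have "- c * f i = c * ((1 - q ^ i) / (1 - q)) - c * Y" unfolding f_def
          using mult_minus_left[of c] right_diff_distrib[of c Y "(1 - q ^ i) / (1 - q)"] by simp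
        also have "\<dots> = 1 - q ^ i - c * Y" by (simp only: h)
        finally show ?thesis by simp
      qed
      have "poly (smult (G q k (n - k) * c ^ k * (-1) ^ k) (SP q k)) Y
          = G q k (n - k) * (c ^ k * (-1) ^ k * (\<Prod>i<k. f i))"
        unfolding poly_smult SP_poly[OF q0] f_def by (simp only: ac_simps)
      also have "\<dots> = G q k (n - k) * (\<Prod>i<k. (1 - c * Y) - q ^ i)"
        unfolding e1[symmetric] e2 ..
      finally show "poly (smult (G q k (n - k) * c ^ k * (-1) ^ k) (SP q k)) Y = G q k (n - k) * (\<Prod>i<k. (1 - c * Y) - q ^ i)" .
    qed
    also have "\<dots> = (1 - c * Y) ^ n" by (rule newton[symmetric])
    also have "\<dots> = ((- c * Y) + 1) ^ n" by simp
    also have "\<dots> = (\<Sum>j\<le>n. of_nat (n choose j) * (- c * Y) ^ j * 1 ^ (n - j))"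
      by (rule binomial_ring)
    also have "\<dots> = poly Bp Y"
      unfolding Bp_def poly_sum poly_monom
    proof (intro sum.cong refl)
      fix j
      show "of_nat (n choose j) * (- c * Y) ^ j * 1 ^ (n - j) = of_nat (n choose j) * (- c) ^ j * Y ^ j"
        by (simp only: power_one mult_1_right power_mult_distrib mult.assoc)
    qed
    finally show ?thesis .
  qed
  hence AB: "A = Bp" using poly_eq_poly_eq_iff by blast
  have cA: "coeff A l = (\<Sum>k\<le>n. G q k (n - k) * c ^ k * (-1) ^ k * stirling1q q k l)"
    by (simp add: A_def coeff_sum stirling_SP)
  have cB: "coeff Bp l = of_nat (n choose l) * (- c) ^ l"
    using ln by (simp add: Bp_def coeff_sum coeff_monom)
  have zero: "stirling1q q k l = 0" if "k < l" for k
    using SP_degree[of q k] that by (simp add: stirling_SP coeff_eq_0)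
  have "(\<Sum>k=l..n. G q k (n - k) * (1 / (1 - q) ^ (n + l - k)) * stirling1q q k l * (-1) ^ k)
      = (\<Sum>k=l..n. G q k (n - k) * c ^ k * (-1) ^ k * stirling1q q k l) / (c ^ n * c ^ l)"
    unfolding sum_divide_distrib
  proof (intro sum.cong refl)
    fix k assume k: "k \<in> {l..n}"
    have "c ^ (n + l - k) * c ^ k = c ^ n * c ^ l"
      using k by (simp add: power_add[symmetric])
    thus "G q k (n - k) * (1 / (1 - q) ^ (n + l - k)) * stirling1q q k l * (-1) ^ k
        = G q k (n - k) * c ^ k * (-1) ^ k * stirling1q q k l / (c ^ n * c ^ l)"
    proof -
      have e: "1 / c ^ (n + l - k) = c ^ k / (c ^ n * c ^ l)"
        using c0 by (simp flip: \<open>c ^ (n + l - k) * c ^ k = c ^ n * c ^ l\<close>)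
      show ?thesis unfolding c_def[symmetric] e by (simp add: ac_simps times_divide_eq_right times_divide_eq_left)
    qed
  qed
  also have "(\<Sum>k=l..n. G q k (n - k) * c ^ k * (-1) ^ k * stirling1q q k l)
      = (\<Sum>k\<le>n. G q k (n - k) * c ^ k * (-1) ^ k * stirling1q q k l)"
    by (rule sum.mono_neutral_left) (auto simp: zero)
  also have "\<dots> = of_nat (n choose l) * (- c) ^ l" using cA cB AB by simp
  also have "\<dots> / (c ^ n * c ^ l) = of_nat (n choose l) * (-1) ^ l / c ^ n"
    using c0 by (simp add: power_minus[of c])
  finally show ?thesis by (simp add: c_def)
qed




context
  fixes p :: nat and absv :: "'a::field_char_0 \<Rightarrow> real"
  assumes Cp: "is_Cp p absv" and pp: "prime p"
begin

lemma a_nn: "absv x \<ge> 0" using Cp by (simp add: is_Cp_def)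
lemma a_zero: "absv x = 0 \<longleftrightarrow> x = 0" using Cp by (simp add: is_Cp_def)
lemma a_mult: "absv (x * y) = absv x * absv y" using Cp by (simp add: is_Cp_def)
lemma a_ultra: "absv (x + y) \<le> max (absv x) (absv y)" using Cp by (simp add: is_Cp_def)
lemma a_p: "absv (of_nat p) = 1 / real p" using Cp by (simp add: is_Cp_def)

lemma a_0[simp]: "absv 0 = 0" using a_zero by simp

lemma a_one: "absv 1 = 1"
proof -
  have "absv 1 = absv 1 * absv 1" using a_mult[of 1 1] by simp
  moreover have "absv 1 \<noteq> 0" using a_zero by simp
  ultimately show ?thesis by simp
qed

lemma a_neg: "absv (- x) = absv x"
proof -
  have "absv (-1) * absv (-1) = 1" using a_mult[of "-1" "-1"] a_one by simp
  hence "absv (-1) ^ 2 = 1" by (simp add: power2_eq_square)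
  hence "absv (-1) = 1 \<or> absv (-1) = -1" by (simp add: power2_eq_1_iff)
  hence "absv (-1) = 1" using a_nn[of "-1"] by linarith
  thus ?thesis using a_mult[of "-1" x] by simp
qed

lemma a_sym: "absv (x - y) = absv (y - x)"
  using a_neg[of "x - y"] by simp

lemma a_tri: "absv (x + y) \<le> absv x + absv y"
  using a_ultra[of x y] a_nn[of x] a_nn[of y] by linarith

lemma a_ultra_diff: "absv (x - z) \<le> max (absv (x - y)) (absv (y - z))"
  using a_ultra[of "x - y" "y - z"] by simp

lemma a_pow: "absv (x ^ n) = absv x ^ n"
  by (induction n) (simp_all add: a_one a_mult)

lemma a_divide: "absv (x / y) = absv x / absv y"
proof (cases "y = 0")
  case True thus ?thesis by (simp add: a_zero)
next
  case False
  have "absv (x / y) * absv y = absv x" using a_mult[of "x / y" y] False by simp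
  moreover have "absv y \<noteq> 0" using False a_zero by simp
  ultimately show ?thesis by (simp add: field_simps)
qed

lemma a_nat: "absv (of_nat n) \<le> 1"
proof (induction n)
  case 0 thus ?case by (simp add: a_zero)
next
  case (Suc n)
  have "absv (of_nat (Suc n)) = absv (1 + of_nat n)" by simp
  also have "\<dots> \<le> max (absv 1) (absv (of_nat n))" by (rule a_ultra)
  finally show ?case using Suc a_one by simp
qed

lemma a_int: "absv (of_int j) \<le> 1"
proof (cases "j \<ge> 0")
  case True
  then show ?thesis using a_nat[of "nat j"] by simp
next
  case False
  hence "of_int j = - (of_nat (nat (- j)) :: 'a)" by simp
  then show ?thesis using a_nat[of "nat (-j)"] a_neg by simp
qed

lemma a_sum_le:
  assumes "finite S" "\<And>i. i \<in> S \<Longrightarrow> absv (f i) \<le> M" "M \<ge> 0"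
  shows "absv (sum f S) \<le> M"
  using assms
proof (induction S rule: finite_induct)
  case empty thus ?case by (simp add: a_zero)
next
  case (insert a S)
  have "absv (sum f (insert a S)) = absv (f a + sum f S)" using insert by simp
  also have "\<dots> \<le> max (absv (f a)) (absv (sum f S))" by (rule a_ultra)
  also have "\<dots> \<le> M" using insert by simp
  finally show ?case .
qed

lemma a_sum_tri: "absv (sum f S) \<le> (\<Sum>i\<in>S. absv (f i))"
proof (induction S rule: infinite_finite_induct)
  case (infinite A) thus ?case by (simp add: a_zero)
next
  case empty thus ?case by (simp add: a_zero)
next
  case (insert a S)
  thus ?case using a_tri[of "f a" "sum f S"] by simp
qed

lemma p_gt1: "p > 1" using pp prime_gt_1_nat by blast

lemma a_coprime:
  assumes "\<not> int p dvd j"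
  shows "absv (of_int j) = 1"
proof -
  have "prime (int p)" using pp by simp
  hence "coprime (int p) j" using assms prime_imp_coprime by blast
  then obtain u v where uv: "u * int p + v * j = 1"
    using bezout_int[of "int p" j] by (metis coprime_iff_gcd_eq_1)
  have "1 = absv (of_int (u * int p + v * j))" using uv a_one by simp
  also have "\<dots> = absv (of_int u * of_nat p + of_int v * of_int j)" by simp
  also have "\<dots> \<le> max (absv (of_int u * of_nat p)) (absv (of_int v * of_int j))" by (rule a_ultra)
  also have "absv (of_int u * of_nat p) \<le> 1 / real p"
    using a_int[of u] p_gt1 by (simp add: a_mult a_p divide_right_mono)
  also have "absv (of_int v * of_int j) \<le> absv (of_int j :: 'a)"
    using mult_left_le_one_le[OF a_nn[of "of_int j"] a_nn[of "of_int v"] a_int[of v]] by (simp add: a_mult)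
  finally have "1 \<le> max (1 / real p) (absv (of_int j :: 'a))" by simp
  moreover have "1 / real p < 1" using p_gt1 by simp
  ultimately have "1 \<le> absv (of_int j :: 'a)" by linarith
  thus ?thesis using a_int[of j] by simp
qed

lemma a_small_dvd:
  "absv (of_int j :: 'a) < (1 / real p) ^ N \<Longrightarrow> int p ^ N dvd j"
proof (induction N arbitrary: j)
  case 0 thus ?case by simp
next
  case (Suc N)
  have "(1 / real p) ^ Suc N \<le> (1 / real p) ^ N"
    using p_gt1 by (intro power_decreasing) auto
  hence "int p ^ N dvd j" using Suc by simp
  then obtain j' where j: "j = int p ^ N * j'" by (auto elim: dvdE)
  have eq: "absv (of_int j :: 'a) = (1 / real p) ^ N * absv (of_int j' :: 'a)"
    using j by (simp add: a_mult a_pow a_p)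
  have P: "(1 / real p) ^ N > 0" using p_gt1 by simp
  from Suc.prems eq have "(1 / real p) ^ N * absv (of_int j' :: 'a) < (1 / real p) ^ N * (1 / real p)"
    by (simp only: power_Suc2)
  hence "absv (of_int j' :: 'a) < 1 / real p"
    using mult_less_cancel_left_pos[OF P] by blast
  moreover have "1 / real p < 1" using p_gt1 by simp
  ultimately have "int p dvd j'" using a_coprime by fastforce
  thus ?case using j by simp
qed

end



context
  fixes p :: nat and absv :: "'a::field_char_0 \<Rightarrow> real" and q :: 'a
  assumes Cp: "is_Cp p absv" and pp: "prime p" and podd: "odd p"
    and qsmall: "absv (1 - q) < real p powr (- 1 / (real p - 1))"
begin

lemmas L = a_nn[OF Cp pp] a_zero[OF Cp pp] a_mult[OF Cp pp] a_ultra[OF Cp pp] a_p[OF Cp pp]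
  a_0[OF Cp pp] a_one[OF Cp pp] a_neg[OF Cp pp] a_sym[OF Cp pp] a_tri[OF Cp pp] a_ultra_diff[OF Cp pp]
  a_pow[OF Cp pp] a_divide[OF Cp pp] a_nat[OF Cp pp] a_int[OF Cp pp] a_sum_le[OF Cp pp]
  a_sum_tri[OF Cp pp] p_gt1[OF Cp pp] a_coprime[OF Cp pp] a_small_dvd[OF Cp pp]

lemma a_inv: "absv (inverse x) = inverse (absv x)"
  using L(13)[of 1 x] L(7) by (simp add: inverse_eq_divide)

lemma rho_lt1: "real p powr (- 1 / (real p - 1)) < 1"
proof -
  have "real p > 1" using L(18) by simp
  moreover have "- 1 / (real p - 1) < 0" using \<open>real p > 1\<close> by simp
  ultimately show ?thesis by (simp add: powr_less_one)
qed

lemma aq1: "absv (q - 1) < 1"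
  using qsmall rho_lt1 L(9)[of q 1] by simp

lemma aq: "absv q = 1"
proof -
  have "absv q = absv (1 + (q - 1))" by simp
  also have "\<dots> \<le> max (absv 1) (absv (q - 1))" by (rule L(4))
  finally have le: "absv q \<le> 1" using aq1 L(7) by simp
  have "1 = absv (q + (1 - q))" using L(7) by simp
  also have "\<dots> \<le> max (absv q) (absv (1 - q))" by (rule L(4))
  finally have "1 \<le> max (absv q) (absv (1 - q))" .
  moreover have "absv (1 - q) < 1" using aq1 L(9)[of q 1] by simp
  ultimately have "1 \<le> absv q" by linarith
  with le show ?thesis by simp
qed

lemma q0: "q \<noteq> 0" using aq L(6) by auto

lemma a_powi: "absv (q powi n) = 1"
proof (cases "n \<ge> 0")
  case True
  then obtain k where "n = int k" using nonneg_int_cases by blast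
  thus ?thesis using aq by (simp add: L(12))
next
  case False
  define k where "k = nat (- n)"
  have "n = - int k" using False by (simp add: k_def)
  thus ?thesis using aq q0 by (simp add: power_int_minus L(12) a_inv)
qed


lemma a_pow_diff:
  assumes "absv a \<le> 1" "absv b \<le> 1"
  shows "absv (a ^ k - b ^ k) \<le> absv (a - b)"
proof -
  have e: "a ^ k - b ^ k = (a - b) * (\<Sum>i<k. b ^ (k - Suc i) * a ^ i)" by (rule power_diff_sumr2)
  have "absv (\<Sum>i<k. b ^ (k - Suc i) * a ^ i) \<le> 1"
  proof (rule L(16))
    fix i
    have "absv b ^ (k - Suc i) \<le> 1" "absv a ^ i \<le> 1"
      using assms L(1) by (auto intro: power_le_one)
    thus "absv (b ^ (k - Suc i) * a ^ i) \<le> 1"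
      using L(1) by (simp add: L(3) L(12) mult_le_one)
  qed auto
  hence "absv (a - b) * absv (\<Sum>i<k. b ^ (k - Suc i) * a ^ i) \<le> absv (a - b)"
    using L(1)[of "a - b"] L(1)[of "\<Sum>i<k. b ^ (k - Suc i) * a ^ i"] by (simp add: mult_left_le)
  thus ?thesis using e by (simp add: L(3))
qed

lemma a_powi_one:
  assumes "absv r = 1"
  shows "absv (r powi m - 1) \<le> absv (r - 1)"
proof (cases "m \<ge> 0")
  case True
  define k where "k = nat m"
  have "m = int k" using True by (simp add: k_def)
  thus ?thesis using a_pow_diff[of r 1 k] assms L(7) by simp
next
  case False
  define k where "k = nat (- m)"
  have m: "m = - int k" using False by (simp add: k_def)
  have r0: "r \<noteq> 0" using assms L(6) by auto
  have rk: "absv (r ^ k) = 1" using assms by (simp add: L(12))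
  have rk0: "r ^ k \<noteq> 0" using r0 by simp
  have "r powi m - 1 = (1 - r ^ k) / r ^ k" using m rk0 by (simp add: power_int_minus field_simps)
  hence "absv (r powi m - 1) = absv (r ^ k - 1)" using rk L(9)[of 1 "r ^ k"] by (simp add: L(13))
  also have "\<dots> \<le> absv (r - 1)" using a_pow_diff[of r 1 k] assms L(7) by simp
  finally show ?thesis .
qed

lemma a_two: "absv (2 :: 'a) = 1"
proof -
  have "\<not> int p dvd 2"
  proof
    assume "int p dvd 2"
    hence "p dvd 2" by presburger
    hence "p \<le> 2" by (simp add: dvd_imp_le)
    moreover have "p \<ge> 2" using L(18) by simp
    ultimately have "p = 2" by simp
    thus False using podd by simp
  qed
  thus ?thesis using L(19)[of 2] by simp
qed

lemma onepl: "1 + q ^ l \<noteq> 0"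
proof
  assume h: "1 + q ^ l = 0"
  have "absv (q ^ l - 1 ^ l) \<le> absv (q - 1)" using a_pow_diff[of q 1 l] aq L(7) by simp
  also have "\<dots> < 1" by (rule aq1)
  finally have "absv (q ^ l - 1) < 1" by simp
  moreover have "q ^ l - 1 = - 2" using h by (simp add: algebra_simps eq_neg_iff_add_eq_0)
  ultimately show False using a_two L(8)[of 2] by simp
qed

lemma a_binom:
  assumes "0 < i" "i < p"
  shows "absv (of_nat (p choose i) :: 'a) \<le> 1 / real p"
proof -
  have "p dvd (p choose i)" using assms pp by (intro dvd_choose_prime) auto
  then obtain m where m: "p choose i = p * m" by (auto elim: dvdE)
  have "absv (of_nat (p choose i) :: 'a) = 1 / real p * absv (of_nat m :: 'a)"
    using m by (simp add: L(3) L(5))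
  also have "\<dots> \<le> 1 / real p * 1" using L(14)[of m] by (intro mult_left_mono) auto
  finally show ?thesis by simp
qed

lemma rho_pow: "(real p powr (- 1 / (real p - 1))) ^ (p - 1) = 1 / real p"
proof -
  have p1: "real p > 1" using L(18) by simp
  have "(real p powr (- 1 / (real p - 1))) ^ (p - 1) = real p powr (real (p - 1) * (- 1 / (real p - 1)))"
    using p1 by (intro powr_power) auto
  also have "real (p - 1) = real p - 1" using p1 by (simp add: of_nat_diff)
  also have "(real p - 1) * (- 1 / (real p - 1)) = -1" using p1 by simp
  finally show ?thesis using p1 by simp
qed

lemma a_powp:
  assumes r: "absv (r - 1) < real p powr (- 1 / (real p - 1))"
  shows "absv (r ^ p - 1) \<le> absv (r - 1) / real p"
proof -
  define s where "s = r - 1"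
  define t where "t = absv s"
  have t0: "t \<ge> 0" using L(1) by (simp add: t_def)
  have t1: "t \<le> 1" using r rho_lt1 by (simp add: t_def s_def)
  have tp: "t ^ (p - 1) \<le> 1 / real p"
  proof -
    have "t ^ (p - 1) \<le> (real p powr (- 1 / (real p - 1))) ^ (p - 1)"
      using t0 r by (intro power_mono) (auto simp: t_def s_def)
    thus ?thesis using rho_pow by simp
  qed
  obtain p' where p': "p = Suc p'" using L(18) by (cases p) auto
  have "r ^ p = (s + 1) ^ p" by (simp add: s_def)
  also have "\<dots> = (\<Sum>i\<le>p. of_nat (p choose i) * s ^ i * 1 ^ (p - i))" by (rule binomial_ring)
  also have "\<dots> = 1 + (\<Sum>i\<le>p'. of_nat (p choose Suc i) * s ^ Suc i)"
    unfolding p' sum.atMost_Suc_shift by simp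
  finally have e: "r ^ p - 1 = (\<Sum>i\<le>p'. of_nat (p choose Suc i) * s ^ Suc i)" by simp
  have "absv (\<Sum>i\<le>p'. of_nat (p choose Suc i) * s ^ Suc i) \<le> t / real p"
  proof (rule L(16))
    fix i assume i: "i \<in> {..p'}"
    show "absv (of_nat (p choose Suc i) * s ^ Suc i) \<le> t / real p"
    proof (cases "Suc i = p")
      case True
      have "absv (of_nat (p choose Suc i) * s ^ Suc i) = t * t ^ (p - 1)"
        using True p' by (simp add: L(3) L(12) L(7) t_def)
      also have "\<dots> \<le> t * (1 / real p)" using tp t0 by (intro mult_left_mono) auto
      finally show ?thesis by simp
    next
      case False
      hence "Suc i < p" using i p' by simp
      hence "absv (of_nat (p choose Suc i) :: 'a) \<le> 1 / real p" by (intro a_binom) auto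
      moreover have "absv (s ^ Suc i) \<le> t"
      proof -
        have "absv (s ^ Suc i) = t * t ^ i" unfolding L(12) t_def by simp
        also have "\<dots> \<le> t * 1" using t0 t1 by (intro mult_left_mono power_le_one) auto
        finally show ?thesis by simp
      qed
      ultimately have "absv (of_nat (p choose Suc i) :: 'a) * absv (s ^ Suc i) \<le> 1 / real p * t"
        using L(1) by (intro mult_mono) auto
      thus ?thesis by (simp add: L(3))
    qed
  qed (use t0 in auto)
  thus ?thesis using e by (simp add: t_def s_def)
qed

lemma a_qpN: "absv (q ^ (p ^ N) - 1) \<le> absv (q - 1) / real p ^ N"
proof (induction N)
  case 0 thus ?case by simp
next
  case (Suc N)
  have p1: "real p > 1" using L(18) by simp
  have "absv (q - 1) / real p ^ N \<le> absv (q - 1)"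
  proof -
    have "1 \<le> real p ^ N" using p1 by simp
    hence "absv (q - 1) * 1 \<le> absv (q - 1) * real p ^ N" by (intro mult_left_mono) (simp_all add: L(1))
    moreover have "real p ^ N > 0" using p1 by simp
    ultimately show ?thesis by (simp add: divide_le_eq)
  qed
  hence "absv (q ^ (p ^ N) - 1) < real p powr (- 1 / (real p - 1))"
    using Suc qsmall L(9)[of 1 q] by simp
  hence "absv ((q ^ (p ^ N)) ^ p - 1) \<le> absv (q ^ (p ^ N) - 1) / real p" by (rule a_powp)
  also have "\<dots> \<le> absv (q - 1) / real p ^ N / real p"
    using Suc p1 by (intro divide_right_mono) auto
  finally show ?case by (simp add: power_mult[symmetric] mult.commute)
qed

lemma UC:
  assumes "e > 0"
  shows "\<exists>d>0. \<forall>n n' :: int. absv (of_int n - of_int n') < d \<longrightarrow> absv (q powi n - q powi n') < e"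
proof -
  have p1: "real p > 1" using L(18) by simp
  obtain N where N: "absv (q - 1) / e < real p ^ N" using real_arch_pow[OF p1] by blast
  have pN: "real p ^ N > 0" using p1 by simp
  have small: "absv (q - 1) / real p ^ N < e" using N assms pN by (simp add: field_simps)
  show ?thesis
  proof (intro exI[of _ "(1 / real p) ^ N"] conjI allI impI)
    show "(1 / real p) ^ N > 0" using p1 by simp
    fix n n' :: int
    assume h: "absv (of_int n - of_int n') < (1 / real p) ^ N"
    have "int p ^ N dvd (n - n')" using h by (intro L(20)) simp
    then obtain m where m: "n - n' = int p ^ N * m" by (auto elim: dvdE)
    have "q powi n = q powi n' * q powi (n - n')" using q0 by (simp flip: power_int_add)
    also have "q powi (n - n') = (q ^ (p ^ N)) powi m"
      unfolding m by (simp add: power_int_mult flip: of_nat_power)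
    finally have "q powi n - q powi n' = q powi n' * ((q ^ (p ^ N)) powi m - 1)"
      by (simp add: algebra_simps)
    hence "absv (q powi n - q powi n') = absv ((q ^ (p ^ N)) powi m - 1)"
      by (simp add: L(3) a_powi)
    also have "\<dots> \<le> absv (q ^ (p ^ N) - 1)" using aq by (intro a_powi_one) (simp add: L(12))
    also have "\<dots> \<le> absv (q - 1) / real p ^ N" by (rule a_qpN)
    finally show "absv (q powi n - q powi n') < e" using small by simp
  qed
qed


lemma qpow_suff:
  assumes "\<And>e d. e > 0 \<Longrightarrow> d > 0 \<Longrightarrow> \<exists>n::int. absv (z - of_int n) < d \<and> absv (q powi n - v) < e"
  shows "qpow_has absv q z v"
  unfolding qpow_has_def
proof (intro allI impI)
  fix e :: real assume e: "e > 0"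
  obtain d where d: "d > 0" "\<And>n n' :: int. absv (of_int n - of_int n') < d \<Longrightarrow> absv (q powi n - q powi n') < e"
    using UC[OF e] by blast
  show "\<exists>d>0. \<forall>n::int. absv (z - of_int n) < d \<longrightarrow> absv (q powi n - v) < e"
  proof (intro exI[of _ d] conjI allI impI)
    show "d > 0" by fact
    fix n :: int assume n: "absv (z - of_int n) < d"
    obtain n0 where n0: "absv (z - of_int n0) < d" "absv (q powi n0 - v) < e"
      using assms[OF e d(1)] by blast
    have "absv (of_int n - of_int n0 :: 'a) \<le> max (absv (of_int n - z)) (absv (z - of_int n0))"
      by (rule L(11))
    also have "\<dots> < d" using n n0 L(9)[of "of_int n" z] by simp
    finally have "absv (q powi n - q powi n0) < e" by (rule d(2))
    hence "max (absv (q powi n - q powi n0)) (absv (q powi n0 - v)) < e" using n0 by simp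
    thus "absv (q powi n - v) < e" using L(11)[of "q powi n" v "q powi n0"] by linarith
  qed
qed

lemma qpow_unique:
  assumes z: "z \<in> Zp absv" and v: "qpow_has absv q z v" and w: "qpow_has absv q z w"
  shows "v = w"
proof (rule ccontr)
  assume ne: "v \<noteq> w"
  define e where "e = absv (v - w)"
  have e: "e > 0" using ne L(2)[of "v - w"] L(1)[of "v - w"] by (simp add: e_def)
  obtain d1 where d1: "d1 > 0" "\<And>n::int. absv (z - of_int n) < d1 \<Longrightarrow> absv (q powi n - v) < e"
    using v e unfolding qpow_has_def by blast
  obtain d2 where d2: "d2 > 0" "\<And>n::int. absv (z - of_int n) < d2 \<Longrightarrow> absv (q powi n - w) < e"
    using w e unfolding qpow_has_def by blast
  have md: "min d1 d2 > 0" using d1(1) d2(1) by simp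
  obtain n :: int where n: "absv (z - of_int n) < min d1 d2"
    using z md unfolding Zp_def by blast
  have "absv (v - w) \<le> max (absv (v - q powi n)) (absv (q powi n - w))" by (rule L(11))
  also have "\<dots> < e" using d1(2)[of n] d2(2)[of n] n L(9)[of v "q powi n"] by simp
  finally show False by (simp add: e_def)
qed

lemma qpow_eq:
  assumes "z \<in> Zp absv" "qpow_has absv q z v"
  shows "qpow absv q z = v"
  unfolding qpow_def using assms qpow_unique by blast

lemma qpow_exists:
  assumes z: "z \<in> Zp absv"
  shows "\<exists>v. qpow_has absv q z v"
proof -
  have "\<forall>k::nat. \<exists>n::int. absv (z - of_int n) < inverse (real (Suc k))"
    using z unfolding Zp_def by simp
  then obtain n :: "nat \<Rightarrow> int" where n: "\<And>k. absv (z - of_int (n k)) < inverse (real (Suc k))"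
    by metis
  define X where "X k = q powi n k" for k
  have cauchy: "\<forall>e>0. \<exists>M. \<forall>a\<ge>M. \<forall>b\<ge>M. absv (X a - X b) < e"
  proof (intro allI impI)
    fix e :: real assume e: "e > 0"
    obtain d where d: "d > 0" "\<And>n n' :: int. absv (of_int n - of_int n') < d \<Longrightarrow> absv (q powi n - q powi n') < e"
      using UC[OF e] by blast
    obtain M where M: "inverse (real (Suc M)) < d" using reals_Archimedean[OF d(1)] by blast
    have small: "absv (z - of_int (n a)) < d" if "a \<ge> M" for a
    proof -
      have "inverse (real (Suc a)) \<le> inverse (real (Suc M))" using that by (simp add: le_imp_inverse_le)
      thus ?thesis using n[of a] M by linarith
    qed
    show "\<exists>M. \<forall>a\<ge>M. \<forall>b\<ge>M. absv (X a - X b) < e"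
    proof (intro exI[of _ M] allI impI)
      fix a b assume a: "a \<ge> M" and b: "b \<ge> M"
      have "absv (of_int (n a) - of_int (n b) :: 'a) \<le> max (absv (of_int (n a) - z)) (absv (z - of_int (n b)))"
        by (rule L(11))
      also have "\<dots> < d" using small[OF a] small[OF b] L(9)[of "of_int (n a)" z] by simp
      finally show "absv (X a - X b) < e" unfolding X_def by (rule d(2))
    qed
  qed
  then obtain v where v: "abs_tends_zero (\<lambda>k. absv (X k - v))"
    using Cp unfolding is_Cp_def by blast
  have "qpow_has absv q z v"
  proof (rule qpow_suff)
    fix e d :: real assume e: "e > 0" and d: "d > 0"
    obtain M1 where M1: "\<And>m. m \<ge> M1 \<Longrightarrow> absv (X m - v) < e"
      using v e unfolding abs_tends_zero_def by blast
    obtain M2 where M2: "inverse (real (Suc M2)) < d" using reals_Archimedean[OF d] by blast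
    define k where "k = max M1 M2"
    have "inverse (real (Suc k)) \<le> inverse (real (Suc M2))" by (simp add: k_def le_imp_inverse_le)
    hence "absv (z - of_int (n k)) < d" using n[of k] M2 by linarith
    moreover have "absv (q powi n k - v) < e" using M1[of k] by (simp add: k_def X_def)
    ultimately show "\<exists>n::int. absv (z - of_int n) < d \<and> absv (q powi n - v) < e" by blast
  qed
  thus ?thesis by blast
qed

lemma Zp_add:
  assumes "z \<in> Zp absv"
  shows "z + of_nat y \<in> Zp absv"
  unfolding Zp_def
proof (intro CollectI allI impI)
  fix e :: real assume "e > 0"
  then obtain n :: int where "absv (z - of_int n) < e" using assms unfolding Zp_def by blast
  hence "absv (z + of_nat y - of_int (n + int y)) < e" by simp
  thus "\<exists>n::int. absv (z + of_nat y - of_int n) < e" by blast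
qed

lemma Zp_mult:
  assumes "z \<in> Zp absv"
  shows "of_nat l * z \<in> Zp absv"
  unfolding Zp_def
proof (intro CollectI allI impI)
  fix e :: real assume "e > 0"
  then obtain n :: int where n: "absv (z - of_int n) < e" using assms unfolding Zp_def by blast
  have "absv (of_nat l * z - of_int (int l * n)) = absv (of_nat l :: 'a) * absv (z - of_int n)"
    by (simp add: L(3) flip: right_diff_distrib)
  also have "\<dots> \<le> 1 * absv (z - of_int n)" using L(14)[of l] L(1) by (intro mult_right_mono) auto
  finally have "absv (of_nat l * z - of_int (int l * n)) < e" using n by simp
  thus "\<exists>n::int. absv (of_nat l * z - of_int n) < e" by blast
qed

lemma qpow_le1:
  assumes z: "z \<in> Zp absv" and v: "qpow_has absv q z v"
  shows "absv v \<le> 1"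
proof -
  obtain d where d: "d > 0" "\<And>n::int. absv (z - of_int n) < d \<Longrightarrow> absv (q powi n - v) < 1"
    using v unfolding qpow_has_def by (meson zero_less_one)
  obtain n :: int where n: "absv (z - of_int n) < d" using z d(1) unfolding Zp_def by blast
  have "absv v = absv (q powi n + (v - q powi n))" by simp
  also have "\<dots> \<le> max (absv (q powi n)) (absv (v - q powi n))" by (rule L(4))
  also have "\<dots> \<le> 1" using d(2)[OF n] a_powi L(9)[of v "q powi n"] by simp
  finally show ?thesis .
qed

lemma qpow_has_add:
  assumes z: "z \<in> Zp absv" and v: "qpow_has absv q z v"
  shows "qpow_has absv q (z + of_nat y) (v * q ^ y)"
proof (rule qpow_suff)
  fix e d :: real assume e: "e > 0" and d: "d > 0"
  obtain d1 where d1: "d1 > 0" "\<And>n::int. absv (z - of_int n) < d1 \<Longrightarrow> absv (q powi n - v) < e"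
    using v e unfolding qpow_has_def by blast
  have md: "min d d1 > 0" using d d1(1) by simp
  obtain m :: int where m: "absv (z - of_int m) < min d d1"
    using z md unfolding Zp_def by blast
  have "absv (z + of_nat y - of_int (m + int y)) < d" using m by simp
  moreover have "q powi (m + int y) - v * q ^ y = (q powi m - v) * q ^ y"
    using q0 by (simp add: power_int_add algebra_simps)
  hence "absv (q powi (m + int y) - v * q ^ y) < e"
    using d1(2)[of m] m aq by (simp add: L(3) L(12))
  ultimately show "\<exists>n::int. absv (z + of_nat y - of_int n) < d \<and> absv (q powi n - v * q ^ y) < e" by blast
qed

lemma qpow_has_mult:
  assumes z: "z \<in> Zp absv" and v: "qpow_has absv q z v"
  shows "qpow_has absv q (of_nat l * z) (v ^ l)"
proof (rule qpow_suff)
  fix e d :: real assume e: "e > 0" and d: "d > 0"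
  obtain d1 where d1: "d1 > 0" "\<And>n::int. absv (z - of_int n) < d1 \<Longrightarrow> absv (q powi n - v) < e"
    using v e unfolding qpow_has_def by blast
  have md: "min d d1 > 0" using d d1(1) by simp
  obtain m :: int where m: "absv (z - of_int m) < min d d1"
    using z md unfolding Zp_def by blast
  have "absv (of_nat l * z - of_int (int l * m)) = absv (of_nat l :: 'a) * absv (z - of_int m)"
    by (simp add: L(3) flip: right_diff_distrib)
  also have "\<dots> \<le> 1 * absv (z - of_int m)" using L(14)[of l] L(1) by (intro mult_right_mono) auto
  finally have "absv (of_nat l * z - of_int (int l * m)) < d" using m by simp
  moreover have "q powi (int l * m) = (q powi m) ^ l"
    by (simp add: power_int_mult mult.commute[of "int l"])
  hence "absv (q powi (int l * m) - v ^ l) \<le> absv (q powi m - v)"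
    using a_pow_diff[of "q powi m" v l] a_powi qpow_le1[OF z v] by simp
  hence "absv (q powi (int l * m) - v ^ l) < e" using d1(2)[of m] m by simp
  ultimately show "\<exists>n::int. absv (of_nat l * z - of_int n) < d \<and> absv (q powi n - v ^ l) < e" by blast
qed


lemma field_aux:
  fixes E :: "'b::field"
  assumes "E \<noteq> 0"
  shows "c * Q * ((1 + X) / E) - 2 * (c * (Q / E)) = c * Q / E * (X - 1)"
  using assms by (simp add: field_simps)

lemma main_ctx:
  assumes q1: "q \<noteq> 1" and xZ: "x \<in> Zp absv"
  shows "fermionic_has p absv (\<lambda>y. qnum absv q (x + y) ^ n)
           (2 * (\<Sum>l\<le>n. \<Sum>k=l..n. \<Sum>ls\<in>comps k (n - k).
              q ^ (\<Sum>i\<le>k. i * ls i) * (1 / (1 - q) ^ (n + l - k)) * stirling1q q k l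
              * (-1) ^ k * qpow absv q (of_nat l * x) / (1 + q ^ l)))"
proof -
  obtain Q where hQ: "qpow_has absv q x Q" using qpow_exists[OF xZ] by blast
  have Q1: "absv Q \<le> 1" by (rule qpow_le1[OF xZ hQ])
  define c where "c l = of_nat (n choose l) * (-1) ^ l / (1 - q) ^ n" for l
  define RHS where "RHS = (2 * (\<Sum>l\<le>n. \<Sum>k=l..n. \<Sum>ls\<in>comps k (n - k).
              q ^ (\<Sum>i\<le>k. i * ls i) * (1 / (1 - q) ^ (n + l - k)) * stirling1q q k l
              * (-1) ^ k * qpow absv q (of_nat l * x) / (1 + q ^ l)))"
  have R: "qpow absv q (of_nat l * x) = Q ^ l" for l
    by (rule qpow_eq[OF Zp_mult[OF xZ] qpow_has_mult[OF xZ hQ]])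
  have RHS_eq: "RHS = 2 * (\<Sum>l\<le>n. c l * (Q ^ l / (1 + q ^ l)))"
    unfolding RHS_def
  proof (intro arg_cong[where f = "\<lambda>t. 2 * t"] sum.cong refl)
    fix l assume l: "l \<in> {..n}"
    define E where "E = Q ^ l / (1 + q ^ l)"
    have "(\<Sum>k=l..n. \<Sum>ls\<in>comps k (n - k).
              q ^ (\<Sum>i\<le>k. i * ls i) * (1 / (1 - q) ^ (n + l - k)) * stirling1q q k l
              * (-1) ^ k * qpow absv q (of_nat l * x) / (1 + q ^ l))
        = (\<Sum>k=l..n. G q k (n - k) * (1 / (1 - q) ^ (n + l - k)) * stirling1q q k l * (-1) ^ k * E)"
    proof (intro sum.cong refl)
      fix k
      show "(\<Sum>ls\<in>comps k (n - k).
              q ^ (\<Sum>i\<le>k. i * ls i) * (1 / (1 - q) ^ (n + l - k)) * stirling1q q k l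
              * (-1) ^ k * qpow absv q (of_nat l * x) / (1 + q ^ l))
          = G q k (n - k) * (1 / (1 - q) ^ (n + l - k)) * stirling1q q k l * (-1) ^ k * E"
        unfolding G_def E_def R sum_distrib_right sum_divide_distrib
        by (intro sum.cong refl) (simp add: mult.assoc)
    qed
    also have "\<dots> = (\<Sum>k=l..n. G q k (n - k) * (1 / (1 - q) ^ (n + l - k)) * stirling1q q k l * (-1) ^ k) * E"
      by (simp add: sum_distrib_right)
    also have "\<dots> = c l * E" using coeff_identity[OF q0 q1, of l n] l by (simp add: c_def)
    finally show "(\<Sum>k=l..n. \<Sum>ls\<in>comps k (n - k).
              q ^ (\<Sum>i\<le>k. i * ls i) * (1 / (1 - q) ^ (n + l - k)) * stirling1q q k l
              * (-1) ^ k * qpow absv q (of_nat l * x) / (1 + q ^ l)) = c l * (Q ^ l / (1 + q ^ l))"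
      by (simp add: E_def)
  qed
  have qn: "qnum absv q (x + of_nat y) = (1 - Q * q ^ y) / (1 - q)" for y
    unfolding qnum_def qpow_eq[OF Zp_add[OF xZ] qpow_has_add[OF xZ hQ]] ..
  have expand: "qnum absv q (x + of_nat y) ^ n = (\<Sum>l\<le>n. c l * Q ^ l * (q ^ l) ^ y)" for y
  proof -
    have "qnum absv q (x + of_nat y) ^ n = (- (Q * q ^ y) + 1) ^ n / (1 - q) ^ n"
      by (simp add: qn power_divide)
    also have "(- (Q * q ^ y) + 1) ^ n = (\<Sum>l\<le>n. of_nat (n choose l) * (- (Q * q ^ y)) ^ l * 1 ^ (n - l))"
      by (rule binomial_ring)
    also have "\<dots> / (1 - q) ^ n = (\<Sum>l\<le>n. c l * Q ^ l * (q ^ l) ^ y)"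
      unfolding sum_divide_distrib
    proof (intro sum.cong refl)
      fix l
      have "(- (Q * q ^ y)) ^ l = (-1) ^ l * Q ^ l * (q ^ l) ^ y"
        by (simp add: power_minus[of "Q * q ^ y"] power_mult_distrib flip: power_mult)
           (simp add: mult.commute)
      thus "of_nat (n choose l) * (- (Q * q ^ y)) ^ l * 1 ^ (n - l) / (1 - q) ^ n = c l * Q ^ l * (q ^ l) ^ y"
        by (simp add: c_def)
    qed
    finally show ?thesis .
  qed
  define K where "K = (\<Sum>l\<le>n. absv (c l * Q ^ l / (1 + q ^ l)))"
  have K0: "K \<ge> 0" unfolding K_def by (intro sum_nonneg) (simp add: L(1))
  define t where "t = absv (q - 1)"
  have t0: "t \<ge> 0" by (simp add: t_def L(1))
  have bound: "absv ((\<Sum>y<p ^ N. qnum absv q (x + of_nat y) ^ n * (-1) ^ y) - RHS) \<le> K * (t / real p ^ N)" for N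
  proof -
    define M where "M = p ^ N"
    have Modd: "odd M" using podd by (simp add: M_def)
    have S: "(\<Sum>y<M. qnum absv q (x + of_nat y) ^ n * (-1) ^ y)
        = (\<Sum>l\<le>n. c l * Q ^ l * ((1 + (q ^ l) ^ M) / (1 + q ^ l)))"
    proof -
      have "(\<Sum>y<M. qnum absv q (x + of_nat y) ^ n * (-1) ^ y)
          = (\<Sum>y<M. \<Sum>l\<le>n. c l * Q ^ l * (- (q ^ l)) ^ y)"
        unfolding expand sum_distrib_right
        by (intro sum.cong refl) (simp add: power_minus[of "q ^ _"] mult.commute mult.left_commute)
      also have "\<dots> = (\<Sum>l\<le>n. c l * Q ^ l * (\<Sum>y<M. (- (q ^ l)) ^ y))"
        by (subst sum.swap) (simp add: sum_distrib_left)
      also have "\<dots> = (\<Sum>l\<le>n. c l * Q ^ l * ((1 + (q ^ l) ^ M) / (1 + q ^ l)))"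
      proof (intro sum.cong refl)
        fix l
        have ne: "- (q ^ l) \<noteq> 1"
        proof
          assume h: "- (q ^ l) = 1"
          hence "q ^ l = - 1" by (metis minus_equation_iff)
          thus False using onepl[of l] by simp
        qed
        have "(\<Sum>y<M. (- (q ^ l)) ^ y) = (1 - (- (q ^ l)) ^ M) / (1 - - (q ^ l))"
          using sum_gp_strict[of "- (q ^ l)" M] ne by simp
        also have "(- (q ^ l)) ^ M = - ((q ^ l) ^ M)" using Modd by (simp add: power_minus_odd)
        finally show "c l * Q ^ l * (\<Sum>y<M. (- (q ^ l)) ^ y) = c l * Q ^ l * ((1 + (q ^ l) ^ M) / (1 + q ^ l))"
          by simp
      qed
      finally show ?thesis .
    qed
    have diff: "(\<Sum>l\<le>n. c l * Q ^ l * ((1 + (q ^ l) ^ M) / (1 + q ^ l))) - RHS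
        = (\<Sum>l\<le>n. c l * Q ^ l / (1 + q ^ l) * ((q ^ l) ^ M - 1))"
      unfolding RHS_eq sum_distrib_left sum_subtractf[symmetric]
    proof (intro sum.cong refl)
      fix l
      have E0: "1 + q ^ l \<noteq> 0" by (rule onepl)
      show "c l * Q ^ l * ((1 + (q ^ l) ^ M) / (1 + q ^ l)) - 2 * (c l * (Q ^ l / (1 + q ^ l)))
          = c l * Q ^ l / (1 + q ^ l) * ((q ^ l) ^ M - 1)"
        using field_aux[OF E0] .
    qed
    have tb: "absv ((q ^ l) ^ M - 1) \<le> t / real p ^ N" for l
    proof -
      have qM: "absv (q ^ M) = 1" using aq by (simp add: L(12))
      have "absv ((q ^ l) ^ M - 1) = absv ((q ^ M) ^ l - 1 ^ l)" by (simp flip: power_mult add: mult.commute)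
      also have "\<dots> \<le> absv (q ^ M - 1)" using qM L(7) by (intro a_pow_diff) auto
      also have "\<dots> \<le> t / real p ^ N" unfolding M_def t_def by (rule a_qpN)
      finally show ?thesis .
    qed
    have "absv ((\<Sum>y<p ^ N. qnum absv q (x + of_nat y) ^ n * (-1) ^ y) - RHS)
        = absv (\<Sum>l\<le>n. c l * Q ^ l / (1 + q ^ l) * ((q ^ l) ^ M - 1))"
      using S diff by (simp add: M_def)
    also have "\<dots> \<le> (\<Sum>l\<le>n. absv (c l * Q ^ l / (1 + q ^ l) * ((q ^ l) ^ M - 1)))" by (rule L(17))
    also have "\<dots> \<le> (\<Sum>l\<le>n. absv (c l * Q ^ l / (1 + q ^ l)) * (t / real p ^ N))"
    proof (intro sum_mono)
      fix l
      have "absv (c l * Q ^ l / (1 + q ^ l) * ((q ^ l) ^ M - 1))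
          = absv (c l * Q ^ l / (1 + q ^ l)) * absv ((q ^ l) ^ M - 1)" by (rule L(3))
      also have "\<dots> \<le> absv (c l * Q ^ l / (1 + q ^ l)) * (t / real p ^ N)"
        by (intro mult_left_mono tb L(1))
      finally show "absv (c l * Q ^ l / (1 + q ^ l) * ((q ^ l) ^ M - 1))
          \<le> absv (c l * Q ^ l / (1 + q ^ l)) * (t / real p ^ N)" .
    qed
    also have "\<dots> = K * (t / real p ^ N)" unfolding K_def sum_distrib_right ..
    finally show ?thesis .
  qed
  have "abs_tends_zero (\<lambda>N. absv ((\<Sum>y<p ^ N. qnum absv q (x + of_nat y) ^ n * (-1) ^ y) - RHS))"
    unfolding abs_tends_zero_def
  proof (intro allI impI)
    fix e :: real assume e: "e > 0"
    have p1: "real p > 1" using L(18) by simp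
    obtain N0 where N0: "K * t / e < real p ^ N0" using real_arch_pow[OF p1] by blast
    show "\<exists>M. \<forall>m\<ge>M. absv ((\<Sum>y<p ^ m. qnum absv q (x + of_nat y) ^ n * (-1) ^ y) - RHS) < e"
    proof (intro exI[of _ N0] allI impI)
      fix m assume m: "m \<ge> N0"
      have pN0: "real p ^ N0 > 0" using p1 by simp
      have "real p ^ N0 \<le> real p ^ m" using m p1 by (intro power_increasing) auto
      have "K * (t / real p ^ m) \<le> K * (t / real p ^ N0)"
        using K0 t0 pN0 p1 \<open>real p ^ N0 \<le> real p ^ m\<close>
        by (intro mult_left_mono divide_left_mono) auto
      also have "\<dots> < e" using N0 e pN0 by (simp add: field_simps)
      finally show "absv ((\<Sum>y<p ^ m. qnum absv q (x + of_nat y) ^ n * (-1) ^ y) - RHS) < e"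
        using bound[of m] by linarith
    qed
  qed
  thus ?thesis unfolding fermionic_has_def RHS_def by simp
qed

end

theorem mainTheorem5:
  fixes p :: nat and absv :: "'a::field_char_0 \<Rightarrow> real" and q x :: 'a and n :: nat
  assumes "prime p" and "odd p"
    and "is_Cp p absv"
    and "q \<noteq> 1"
    and "absv (1 - q) < real p powr (- 1 / (real p - 1))"
    and "x \<in> Zp absv"
  shows "fermionic_has p absv (\<lambda>y. qnum absv q (x + y) ^ n)
           (2 * (\<Sum>l\<le>n. \<Sum>k=l..n. \<Sum>ls\<in>comps k (n - k).
              q ^ (\<Sum>i\<le>k. i * ls i) * (1 / (1 - q) ^ (n + l - k)) * stirling1q q k l
              * (-1) ^ k * qpow absv q (of_nat l * x) / (1 + q ^ l)))"
  using main_ctx[OF assms(3) assms(1) assms(2) assms(5) assms(4) assms(6)] .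

end
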